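(* Let $D_n$ be the complete digraph on $n$ vertices (containing both arcs $(u,v)$ and $(v,u)$ for all distinct vertices $u,v$). If $R \subseteq E(D_n)$ is a set of $\ell$ arcs and $j > \ell$, then there are at most $j^\ell n^{j - \ell - 1}$ directed cycles of length $j$ in $D_n$ which contain all arcs of $R$. *)

theory Defs
  imports Main
begin

definition dn_arcs :: "nat \<Rightarrow> (nat \<times> nat) set" where
  "dn_arcs n = {(u, v). u < n \<and> v < n \<and> u \<noteq> v}"

definition dir_cycles :: "nat \<Rightarrow> nat \<Rightarrow> (nat \<times> nat) set set" where
  "dir_cycles n j = {C. 2 \<le> j \<and> (\<exists>f. inj_on f {..<j} \<and> f ` {..<j} \<subseteq> {..<n} \<and>
       C = {(f i, f ((i + 1) mod j)) | i. i < j})}"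

end

theory Submission
  imports Defs "HOL-Library.FuncSet"
begin

lemma succ_closed:
  fixes P :: "nat set"
  assumes "P \<subseteq> {..<j}" "p \<in> P" "(\<lambda>i. Suc i mod j) ` P \<subseteq> P"
  shows "{..<j} \<subseteq> P"
proof -
  have pj: "p < j" using assms by auto
  have all: "(p + k) mod j \<in> P" for k
  proof (induction k)
    case 0 then show ?case using pj assms(2) by simp
  next
    case (Suc k)
    have "(p + Suc k) mod j = Suc ((p + k) mod j) mod j" by (simp add: mod_Suc_eq)
    then show ?case using Suc assms(3) by auto
  qed
  show ?thesis
  proof
    fix i assume "i \<in> {..<j}"
    then have "i < j" by simp
    have "(p + (j - p + i)) mod j = i" using pj \<open>i < j\<close> by simp
    then show "i \<in> P" using all[of "j - p + i"] by simp
  qed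
qed

lemma card_grow:
  fixes P :: "nat set"
  assumes "P \<subseteq> {..<j}" "P \<noteq> {}" "card P < j"
  shows "card P < card (P \<union> (\<lambda>i. Suc i mod j) ` P)"
proof (rule ccontr)
  assume na: "\<not> ?thesis"
  have fin: "finite (P \<union> (\<lambda>i. Suc i mod j) ` P)" using assms(1) finite_subset by blast
  have eq: "P = P \<union> (\<lambda>i. Suc i mod j) ` P"
    using na by (intro card_seteq[OF fin] Un_upper1) simp
  then have "(\<lambda>i. Suc i mod j) ` P \<subseteq> P" by blast
  moreover obtain p where "p \<in> P" using assms(2) by blast
  ultimately have "{..<j} \<subseteq> P" using succ_closed assms(1) by blast
  moreover have "finite P" using assms(1) finite_subset by blast
  ultimately have "j \<le> card P" using card_mono[of P "{..<j}"] by simp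
  then show False using assms(3) by simp
qed

theorem lemma3p2:
  fixes n l j :: nat and R :: "(nat \<times> nat) set"
  assumes "R \<subseteq> dn_arcs n"
    and "card R = l"
    and "R \<noteq> {}"
    and "l < j"
  shows "card {C \<in> dir_cycles n j. R \<subseteq> C} \<le> j ^ l * n ^ (j - l - 1)"
proof -
  define S where "S = {C \<in> dir_cycles n j. R \<subseteq> C}"
  define good where "good = (\<lambda>C f. inj_on f {..<j} \<and> f ` {..<j} \<subseteq> {..<n} \<and>
       C = {(f i, f ((i + 1) mod j)) | i. i < j})"
  define cf where "cf = (\<lambda>C. SOME f. good C f)"
  define pos where "pos = (\<lambda>f. restrict (\<lambda>r. SOME i. i < j \<and> (f i, f ((i + 1) mod j)) = r) R)"
  define T where "T = (\<lambda>p::(nat\<times>nat) \<Rightarrow> nat. p ` R \<union> (\<lambda>i. Suc i mod j) ` p ` R)"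
  define cp where "cp = (\<lambda>p. {..<j} - T p)"
  define A where "A = {p \<in> R \<rightarrow>\<^sub>E {..<j}. inj_on p R}"
  define enc where "enc = (\<lambda>C. (pos (cf C), restrict (cf C) (cp (pos (cf C)))))"
  have finR: "finite R"
  proof -
    have "dn_arcs n \<subseteq> {..<n} \<times> {..<n}" unfolding dn_arcs_def by auto
    then show ?thesis using finite_subset[OF subset_trans[OF assms(1)]] by simp
  qed
  have lpos: "0 < l" using assms(2,3) finR by auto
  have npos: "0 < n"
  proof -
    obtain r where "r \<in> R" using assms(3) by blast
    then show ?thesis using assms(1) unfolding dn_arcs_def by auto
  qed
  have cfgood: "good C (cf C)" if "C \<in> S" for C
  proof -
    from that have "\<exists>f. good C f" unfolding S_def dir_cycles_def good_def by auto
    then show ?thesis unfolding cf_def by (rule someI_ex)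
  qed
  have posprop: "pos (cf C) r < j \<and> (cf C (pos (cf C) r), cf C ((pos (cf C) r + 1) mod j)) = r"
    if "C \<in> S" "r \<in> R" for C r
  proof -
    have "r \<in> C" using that unfolding S_def by auto
    moreover have "C = {(cf C i, cf C ((i + 1) mod j)) | i. i < j}"
      using cfgood[OF that(1)] unfolding good_def by blast
    ultimately have "r \<in> {(cf C i, cf C ((i + 1) mod j)) | i. i < j}"
      by simp
    then obtain i where "i < j \<and> (cf C i, cf C ((i + 1) mod j)) = r"
      by blast
    then have "(SOME i. i < j \<and> (cf C i, cf C ((i + 1) mod j)) = r) < j \<and>
      (cf C (SOME i. i < j \<and> (cf C i, cf C ((i + 1) mod j)) = r),
       cf C (((SOME i. i < j \<and> (cf C i, cf C ((i + 1) mod j)) = r) + 1) mod j)) = r"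
      by (rule someI)
    then show ?thesis unfolding pos_def using that(2) by simp
  qed
  have encA: "pos (cf C) \<in> A" if "C \<in> S" for C
  proof -
    have "pos (cf C) \<in> R \<rightarrow>\<^sub>E {..<j}" unfolding pos_def using posprop[OF that]
      by (auto simp: pos_def)
    moreover have "inj_on (pos (cf C)) R"
    proof (rule inj_onI)
      fix r s assume "r \<in> R" "s \<in> R" "pos (cf C) r = pos (cf C) s"
      then show "r = s" using posprop[OF that, of r] posprop[OF that, of s] by metis
    qed
    ultimately show ?thesis unfolding A_def by blast
  qed
  have inj: "inj_on enc S"
  proof (rule inj_onI)
    fix C D assume C: "C \<in> S" and D: "D \<in> S" and e: "enc C = enc D"
    define f where "f = cf C"
    define g where "g = cf D"
    have pe: "pos f = pos g" using e unfolding enc_def f_def g_def by simp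
    have re: "restrict f (cp (pos f)) = restrict g (cp (pos f))"
      using e pe unfolding enc_def f_def g_def by simp
    have fg: "f i = g i" if "i < j" for i
    proof (cases "i \<in> T (pos f)")
      case False
      then have "i \<in> cp (pos f)" using that unfolding cp_def by auto
      then show ?thesis using re by (metis restrict_apply')
    next
      case True
      then obtain r where r: "r \<in> R" and "i = pos f r \<or> i = Suc (pos f r) mod j"
        unfolding T_def by auto
      moreover have "(f (pos f r), f ((pos f r + 1) mod j)) = r"
        using posprop[OF C r] unfolding f_def by simp
      moreover have "(g (pos f r), g ((pos f r + 1) mod j)) = r"
        using posprop[OF D r] pe unfolding g_def by simp
      ultimately show ?thesis by (cases r) auto
    qed
    have "C = {(f i, f ((i + 1) mod j)) | i. i < j}" using cfgood[OF C] unfolding good_def f_def by simp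
    also have "\<dots> = {(g i, g ((i + 1) mod j)) | i. i < j}"
    proof -
      have "j > 0" using assms(4) by simp
      then have "\<forall>i<j. (f i, f ((i + 1) mod j)) = (g i, g ((i + 1) mod j))" using fg by simp
      then have "(\<lambda>i. (f i, f ((i + 1) mod j))) ` {i. i < j} = (\<lambda>i. (g i, g ((i + 1) mod j))) ` {i. i < j}"
        by (intro image_cong) auto
      then show ?thesis by (simp only: image_Collect)
    qed
    also have "\<dots> = D" using cfgood[OF D] unfolding good_def g_def by simp
    finally show "C = D" .
  qed
  define B where "B = (SIGMA p:A. cp p \<rightarrow>\<^sub>E {..<n})"
  have encB: "enc ` S \<subseteq> B"
  proof
    fix x assume "x \<in> enc ` S"
    then obtain C where C: "C \<in> S" and x: "x = enc C" by blast
    have "cf C ` {..<j} \<subseteq> {..<n}" using cfgood[OF C] unfolding good_def by simp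
    then have "restrict (cf C) (cp (pos (cf C))) \<in> cp (pos (cf C)) \<rightarrow>\<^sub>E {..<n}"
      unfolding cp_def by auto
    then show "x \<in> B" unfolding B_def x enc_def using encA[OF C] by auto
  qed
  have finA: "finite A" unfolding A_def using finR by (intro finite_subset[OF _ finite_PiE[of R "\<lambda>_. {..<j}"]]) auto
  have fincp: "finite (cp p)" for p unfolding cp_def by auto
  have finB: "finite B" unfolding B_def using finA fincp by (auto intro!: finite_PiE)
  have cpbound: "card (cp p) \<le> j - l - 1" if "p \<in> A" for p
  proof -
    have pR: "p ` R \<subseteq> {..<j}" "inj_on p R" using that unfolding A_def by auto
    have cP: "card (p ` R) = l" using pR(2) assms(2) by (simp add: card_image)
    have "l < card (T p)" unfolding T_def
      using card_grow[OF pR(1)] cP assms(3,4) by auto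
    moreover have "T p \<subseteq> {..<j}" unfolding T_def using pR(1) assms(4) by auto
    ultimately show ?thesis unfolding cp_def
      by (simp add: card_Diff_subset finite_subset)
  qed
  have "card S \<le> card B" using card_inj_on_le[OF inj encB finB] .
  also have "card B = (\<Sum>p\<in>A. card (cp p \<rightarrow>\<^sub>E {..<n}))"
    unfolding B_def using finA fincp by (simp add: card_SigmaI finite_PiE)
  also have "\<dots> = (\<Sum>p\<in>A. n ^ card (cp p))" by (simp add: card_PiE fincp)
  also have "\<dots> \<le> (\<Sum>p\<in>A. n ^ (j - l - 1))"
    by (rule sum_mono) (use cpbound npos in \<open>auto intro: power_increasing\<close>)
  also have "\<dots> = card A * n ^ (j - l - 1)" by simp
  also have "\<dots> \<le> j ^ l * n ^ (j - l - 1)"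
  proof -
    have "card A \<le> card (R \<rightarrow>\<^sub>E {..<j})" unfolding A_def
      by (rule card_mono) (auto intro: finite_PiE finR)
    also have "\<dots> = j ^ l" using finR assms(2) by (simp add: card_PiE)
    finally show ?thesis by simp
  qed
  finally show ?thesis unfolding S_def .
qed

end
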